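(* Let $X$ be a Banach space, $\Omega\in L(X)$ an isomorphism of $X$ onto itself, $\tau>0$ and $f\in C^{0}([0,\infty),X)$. Then the unique classical solution of $$\ddot x(t)-\Omega^{2}x(t-2\tau)=f(t)\ (t\ge0),\qquad x(t)=0\ (t\in[-2\tau,0])$$ is given by $x(t)=\int_{0}^{t}x_2(t-s;\Omega)f(s)\,ds$ for $t\ge0$ (and $x(t)=0$ for $t\in[-2\tau,0]$).
   Context: For $A\in L(X)$, $\exp_\tau(t;A)=0$ for $t<-\tau$, $=\mathrm{id}_X$ for $-\tau\le t<0$, and $=\sum_{j=0}^{k}A^{j}\frac{(t-(j-1)\tau)^{j}}{j!}$ for $(k-1)\tau\le t<k\tau$, $k\in\mathbb N$. For $t\in\mathbb R$, $x_2(t;\Omega):=\tfrac12\Omega^{-1}(\exp_\tau(t;\Omega)-\exp_\tau(t;-\Omega))$; in particular $x_2(t;\Omega)=0$ for $t<0$. A classical solution is a function $x\in C^{1}([-2\tau,\infty),X)\cap C^{2}([-2\tau,0],X)\cap C^{2}([0,\infty),X)$ (one-sided derivatives at endpoints) satisfying the equations pointwise. *)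

theory Defs
  imports "HOL-Analysis.Analysis"
begin

definition Lpow :: "('a::real_normed_vector \<Rightarrow>\<^sub>L 'a) \<Rightarrow> nat \<Rightarrow> ('a \<Rightarrow>\<^sub>L 'a)" where
  "Lpow A j = ((\<lambda>B. A o\<^sub>L B) ^^ j) id_blinfun"

definition L_iso :: "('a::real_normed_vector \<Rightarrow>\<^sub>L 'a) \<Rightarrow> bool" where
  "L_iso A \<longleftrightarrow> (\<exists>B. B o\<^sub>L A = id_blinfun \<and> A o\<^sub>L B = id_blinfun)"

definition L_inv :: "('a::real_normed_vector \<Rightarrow>\<^sub>L 'a) \<Rightarrow> ('a \<Rightarrow>\<^sub>L 'a)" where
  "L_inv A = (SOME B. B o\<^sub>L A = id_blinfun \<and> A o\<^sub>L B = id_blinfun)"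

text \<open>Delayed exponential exp_tau(t;A).  For (k-1)tau \<le> t < k tau with k \<in> \<nat>,
  k = floor(t/tau) + 1.\<close>
definition delayed_exp :: "real \<Rightarrow> real \<Rightarrow> ('a::real_normed_vector \<Rightarrow>\<^sub>L 'a) \<Rightarrow> ('a \<Rightarrow>\<^sub>L 'a)" where
  "delayed_exp \<tau> t A =
     (if t < - \<tau> then 0
      else if t < 0 then id_blinfun
      else (\<Sum>j\<in>{0..nat (\<lfloor>t / \<tau>\<rfloor> + 1)}.
              ((t - (real j - 1) * \<tau>) ^ j / fact j) *\<^sub>R Lpow A j))"

definition x2 :: "real \<Rightarrow> real \<Rightarrow> ('a::real_normed_vector \<Rightarrow>\<^sub>L 'a) \<Rightarrow> ('a \<Rightarrow>\<^sub>L 'a)" where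
  "x2 \<tau> t \<Omega> = (1/2) *\<^sub>R (L_inv \<Omega> o\<^sub>L (delayed_exp \<tau> t \<Omega> - delayed_exp \<tau> t (- \<Omega>)))"

text \<open>Classical solution of x''(t) - Omega^2 x(t - 2 tau) = f(t) (t \<ge> 0),
  x(t) = 0 on [-2tau, 0]:  x \<in> C^1([-2tau,\<infinity>)) \<inter> C^2([-2tau,0]) \<inter> C^2([0,\<infinity>)),
  with one-sided derivatives at endpoints.\<close>
definition classical_solution ::
  "real \<Rightarrow> ('a::real_normed_vector \<Rightarrow>\<^sub>L 'a) \<Rightarrow> (real \<Rightarrow> 'a) \<Rightarrow> (real \<Rightarrow> 'a) \<Rightarrow> bool" where
  "classical_solution \<tau> \<Omega> f x \<longleftrightarrow>
     (\<exists>x' y'' z''.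
        (\<forall>t\<in>{-2*\<tau>..}. (x has_vector_derivative x' t) (at t within {-2*\<tau>..})) \<and>
        continuous_on {-2*\<tau>..} x' \<and>
        (\<forall>t\<in>{-2*\<tau>..0}. (x' has_vector_derivative y'' t) (at t within {-2*\<tau>..0})) \<and>
        continuous_on {-2*\<tau>..0} y'' \<and>
        (\<forall>t\<in>{0..}. (x' has_vector_derivative z'' t) (at t within {0..})) \<and>
        continuous_on {0..} z'' \<and>
        (\<forall>t\<in>{0..}. z'' t - Lpow \<Omega> 2 (x (t - 2*\<tau>)) = f t) \<and>
        (\<forall>t\<in>{-2*\<tau>..0}. x t = 0))"

end

theory Submission
  imports Defs
begin


lemma Lcomp_assoc: "(A o\<^sub>L B) o\<^sub>L C = A o\<^sub>L (B o\<^sub>L C)"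
  by (rule blinfun_eqI) simp

lemma Lid_comp[simp]: "id_blinfun o\<^sub>L B = B" "B o\<^sub>L id_blinfun = B"
  by (rule blinfun_eqI, simp)+

lemma Lpow_0[simp]: "Lpow A 0 = id_blinfun" by (simp add: Lpow_def)
lemma Lpow_Suc: "Lpow A (Suc j) = A o\<^sub>L Lpow A j" by (simp add: Lpow_def)

lemma Lpow_add: "Lpow A (i + j) = Lpow A i o\<^sub>L Lpow A j"
  by (induction i) (auto simp: Lpow_Suc Lcomp_assoc)

lemma Lpow_neg: "Lpow (-A) j = ((-1::real)^j) *\<^sub>R Lpow A j"
proof (induction j)
  case (Suc j) then show ?case
    by (auto simp: Lpow_Suc intro!: blinfun_eqI simp: blinfun.bilinear_simps)
qed simp

lemma L_inv_props:
  assumes "L_iso A" shows "L_inv A o\<^sub>L A = id_blinfun" "A o\<^sub>L L_inv A = id_blinfun"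
  using someI_ex[OF assms[unfolded L_iso_def]] unfolding L_inv_def by auto

lemma L_inv_Lpow:
  assumes "L_iso A" shows "L_inv A o\<^sub>L Lpow A (Suc j) = Lpow A j"
  by (simp add: Lpow_Suc Lcomp_assoc[symmetric] L_inv_props[OF assms])



definition q :: "nat \<Rightarrow> real \<Rightarrow> real" where
  "q n u = (if u \<le> 0 then 0 else u ^ n / fact n)"

definition KS :: "real \<Rightarrow> ('a::real_normed_vector \<Rightarrow>\<^sub>L 'a) \<Rightarrow> nat \<Rightarrow> real \<Rightarrow> ('a \<Rightarrow>\<^sub>L 'a)" where
  "KS \<tau> W N t = (\<Sum>m<N. q (2*m+1) (t - 2 * real m * \<tau>) *\<^sub>R Lpow W (2*m))"

lemma q_nonpos[simp]: "u \<le> 0 \<Longrightarrow> q n u = 0" by (simp add: q_def)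

lemma KS_stable:
  assumes "N \<le> N'" "t \<le> 2 * real N * \<tau>" "\<tau> > 0"
  shows "KS \<tau> W N' t = KS \<tau> W N t"
  using assms(1)
proof (induction N' rule: dec_induct)
  case (step n)
  have "t - 2 * real n * \<tau> \<le> 0"
    using assms step(1) by (smt (verit, best) mult_right_mono of_nat_mono)
  then show ?case using step by (simp add: KS_def)
qed simp

lemma sum_pairs: "(\<Sum>j<2*M. h j) = (\<Sum>m<M. h (2*m) + h (2*m+1))"
  for h :: "nat \<Rightarrow> 'b::comm_monoid_add"
  by (induction M) (auto simp: add.assoc)

lemma x2_KS:
  fixes W :: "'a::real_normed_vector \<Rightarrow>\<^sub>L 'a"
  assumes W: "L_iso W" and tau: "\<tau> > 0" and t: "0 \<le> t" and tN: "t \<le> 2 * real N * \<tau>"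
  shows "x2 \<tau> t W = KS \<tau> W N t"
proof -
  define k where "k = nat (\<lfloor>t / \<tau>\<rfloor> + 1)"
  define c where "c j = (t - (real j - 1) * \<tau>) ^ j / fact j" for j :: nat
  have de: "delayed_exp \<tau> t A = (\<Sum>j\<in>{0..k}. c j *\<^sub>R Lpow A j)" for A :: "'a \<Rightarrow>\<^sub>L 'a"
    using t tau by (simp add: delayed_exp_def k_def c_def)
  have D: "delayed_exp \<tau> t W - delayed_exp \<tau> t (-W) = (\<Sum>j\<in>{0..k}. (c j * (1 - (-1)^j)) *\<^sub>R Lpow W j)"
    unfolding de Lpow_neg by (simp add: sum_subtractf[symmetric] algebra_simps)
  have inv: "L_inv W o\<^sub>L ((c j * (1 - (-1)^j)) *\<^sub>R Lpow W j)
      = (if odd j then (2 * c j) *\<^sub>R Lpow W (j - 1) else 0)" for j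
  proof (cases "odd j")
    case True
    then obtain i where "j = Suc i" by (cases j) auto
    then show ?thesis using True L_inv_Lpow[OF W, of i]
      by (simp add: bounded_bilinear.scaleR_right[OF bounded_bilinear_blinfun_compose])
  qed simp
  have "x2 \<tau> t W = (\<Sum>j\<in>{0..k}. (if odd j then c j *\<^sub>R Lpow W (j - 1) else 0))"
    unfolding x2_def D bounded_bilinear.sum_right[OF bounded_bilinear_blinfun_compose] inv
    by (simp add: scaleR_sum_right if_distrib cong: if_cong)
  also have "\<dots> = (\<Sum>j\<in>{0..k}. (if odd j then q j (t - (real j - 1) * \<tau>) *\<^sub>R Lpow W (j - 1) else 0))"
  proof (rule sum.cong[OF refl])
    fix j assume j: "j \<in> {0..k}"
    show "(if odd j then c j *\<^sub>R Lpow W (j - 1) else 0) =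
        (if odd j then q j (t - (real j - 1) * \<tau>) *\<^sub>R Lpow W (j - 1) else 0)"
    proof (cases "odd j")
      case True
      have "real j - 1 \<le> real k - 1" using j by auto
      also have "real k - 1 = of_int \<lfloor>t / \<tau>\<rfloor>" using t tau by (simp add: k_def)
      also have "\<dots> \<le> t / \<tau>" by simp
      finally have "(real j - 1) * \<tau> \<le> t" using tau by (simp add: pos_le_divide_eq)
      moreover have "j \<noteq> 0" using True odd_pos by fastforce
      ultimately have "c j = q j (t - (real j - 1) * \<tau>)"
        by (auto simp: c_def q_def)
      then show ?thesis by simp
    qed simp
  qed
  also have "\<dots> = (\<Sum>j<2 * max N (k+1). (if odd j then q j (t - (real j - 1) * \<tau>) *\<^sub>R Lpow W (j - 1) else 0))"
  proof -
    have sub: "{0..k} \<subseteq> {..<2 * max N (k+1)}" by (auto simp: max_def)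
    show ?thesis
    proof (rule sum.mono_neutral_left[OF _ sub])
      show "\<forall>i\<in>{..<2 * max N (k + 1)} - {0..k}.
         (if odd i then q i (t - (real i - 1) * \<tau>) *\<^sub>R Lpow W (i - 1) else 0) = 0"
      proof
        fix i assume i: "i \<in> {..<2 * max N (k + 1)} - {0..k}"
        have "t / \<tau> < of_int (\<lfloor>t / \<tau>\<rfloor> + 1)" by linarith
        also have "\<dots> = real k" using t tau by (simp add: k_def)
        also have "real k \<le> real i - 1" using i by auto
        finally have "t < (real i - 1) * \<tau>" using tau by (simp add: divide_less_eq)
        then show "(if odd i then q i (t - (real i - 1) * \<tau>) *\<^sub>R Lpow W (i - 1) else 0) = 0"
          by simp
      qed
    qed simp
  qed
  also have "\<dots> = KS \<tau> W (max N (k+1)) t"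
    unfolding sum_pairs KS_def by (simp add: algebra_simps)
  also have "\<dots> = KS \<tau> W N t"
    by (rule KS_stable[OF _ tN tau]) simp
  finally show ?thesis .
qed

lemma x2_neg: "t < 0 \<Longrightarrow> x2 \<tau> t W = 0"
  by (simp add: x2_def delayed_exp_def)



lemma has_derivative_Un:
  "(f has_derivative f') (at x within s) \<Longrightarrow> (f has_derivative f') (at x within t) \<Longrightarrow>
   (f has_derivative f') (at x within s \<union> t)"
  by (auto simp: has_derivative_within Lim_within_Un)

lemma has_vector_derivative_Un:
  "(f has_vector_derivative f') (at x within s) \<Longrightarrow> (f has_vector_derivative f') (at x within t) \<Longrightarrow>
   (f has_vector_derivative f') (at x within s \<union> t)"
  unfolding has_vector_derivative_def by (rule has_derivative_Un)

lemma poly_deriv: "((\<lambda>u::real. u ^ Suc n / fact (Suc n)) has_real_derivative u ^ n / fact n) (at u within S)"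
proof -
  have "((\<lambda>u::real. u ^ Suc n / fact (Suc n)) has_real_derivative (real (Suc n) * u ^ n) / fact (Suc n)) (at u within S)"
    using DERIV_cdivide[OF DERIV_pow[of "Suc n" u S], of "fact (Suc n)"] by simp
  moreover have "(real (Suc n) * u ^ n) / fact (Suc n) = u ^ n / fact n"
    by (simp add: fact_Suc del: of_nat_Suc)
  ultimately show ?thesis by simp
qed

lemma q_deriv:
  assumes "n \<ge> 1"
  shows "(q (Suc n) has_real_derivative q n u) (at u)"
proof -
  consider "u < 0" | "u > 0" | "u = 0" by linarith
  then show ?thesis
  proof cases
    case 1
    have d: "((\<lambda>_. 0) has_real_derivative q n u) (at u)" using 1 by simp
    show ?thesis
      by (rule has_field_derivative_transform_within_open[where S="{..<0}", OF d]) (use 1 in \<open>auto simp: q_def\<close>)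
  next
    case 2
    have "((\<lambda>u::real. u ^ Suc n / fact (Suc n)) has_real_derivative q n u) (at u)"
      using poly_deriv[of n u UNIV] 2 by (simp add: q_def)
    then show ?thesis
      by (rule has_field_derivative_transform_within_open[where S="{0<..}"]) (use 2 in \<open>auto simp: q_def\<close>)
  next
    case 3
    have qn0: "q n u = 0" using 3 by simp
    have a: "(q (Suc n) has_real_derivative q n u) (at u within {..0})"
    proof -
      have "((\<lambda>_. 0) has_real_derivative q n u) (at u within {..0})" using qn0 by simp
      then show ?thesis unfolding has_field_derivative_def
        by (rule has_derivative_transform[rotated 2]) (use 3 in \<open>auto simp: q_def\<close>)
    qed
    have b: "(q (Suc n) has_real_derivative q n u) (at u within {0..})"
    proof -
      have "((\<lambda>u::real. u ^ Suc n / fact (Suc n)) has_real_derivative q n u) (at u within {0..})"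
        using poly_deriv[of n u "{0..}"] 3 assms by (simp add: q_def power_0_left)
      then show ?thesis unfolding has_field_derivative_def
        by (rule has_derivative_transform[rotated 2]) (use 3 in \<open>auto simp: q_def\<close>)
    qed
    have "{..0} \<union> {0..} = (UNIV :: real set)" by auto
    then show ?thesis using has_derivative_Un[OF a[unfolded has_field_derivative_def] b[unfolded has_field_derivative_def]]
      by (simp add: has_field_derivative_def)
  qed
qed

lemma q_max: "n \<ge> 1 \<Longrightarrow> q n u = (max u 0) ^ n / fact n"
  by (auto simp: q_def max_def)

lemma q_cont: "n \<ge> 1 \<Longrightarrow> continuous_on UNIV (q n)"
proof -
  assume n: "n \<ge> 1"
  have "continuous_on UNIV (\<lambda>u::real. (max u 0) ^ n / fact n)"
    by (intro continuous_intros) auto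
  moreover have "q n = (\<lambda>u::real. (max u 0) ^ n / fact n)" using q_max[OF n] by auto
  ultimately show ?thesis by simp
qed

definition ES :: "real \<Rightarrow> ('a::real_normed_vector \<Rightarrow>\<^sub>L 'a) \<Rightarrow> nat \<Rightarrow> nat \<Rightarrow> real \<Rightarrow> ('a \<Rightarrow>\<^sub>L 'a)" where
  "ES \<tau> W i N t = (\<Sum>m\<in>{1..<N}. q (2*m+1-i) (t - 2 * real m * \<tau>) *\<^sub>R Lpow W (2*m))"

lemma ES_deriv:
  assumes "i \<le> 1"
  shows "(ES \<tau> W i N has_vector_derivative ES \<tau> W (Suc i) N t) (at t)"
proof -
  have "((\<lambda>t. q (2*m+1-i) (t - 2 * real m * \<tau>) *\<^sub>R Lpow W (2*m)) has_vector_derivative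
      q (2*m+1 - Suc i) (t - 2 * real m * \<tau>) *\<^sub>R Lpow W (2*m)) (at t)" if m: "m \<in> {1..<N}" for m
  proof -
    have e: "2*m+1-i = Suc (2*m+1 - Suc i)" using m assms by auto
    have "(q (2*m+1-i) has_real_derivative q (2*m+1 - Suc i) (t - 2 * real m * \<tau>)) (at (t - 2 * real m * \<tau>))"
      unfolding e by (rule q_deriv) (use m assms in auto)
    note c = DERIV_chain2[of "q (2*m+1-i)" "q (2*m+1 - Suc i) (t - 2 * real m * \<tau>)" "\<lambda>t. t - 2 * real m * \<tau>" t 1 UNIV, OF this]
    have "((\<lambda>t. q (2*m+1-i) (t - 2 * real m * \<tau>)) has_real_derivative q (2*m+1 - Suc i) (t - 2 * real m * \<tau>)) (at t)"
      using c by (simp add: DERIV_diff[OF DERIV_ident DERIV_const, simplified])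
    from has_vector_derivative_scaleR[OF this has_vector_derivative_const[of "Lpow W (2*m)"]]
    show ?thesis by simp
  qed
  note * = this
  show ?thesis unfolding ES_def[abs_def] by (rule has_vector_derivative_sum, erule *)
qed

lemma ES_cont: "continuous_on UNIV (ES \<tau> W 2 N)"
proof -
  have "continuous_on UNIV (\<lambda>t. q (2*m+1-2) (t - 2 * real m * \<tau>) *\<^sub>R Lpow W (2*m))" if "m \<in> {1..<N}" for m
  proof -
    have "continuous_on UNIV (\<lambda>t. q (2*m+1-2) (t - 2 * real m * \<tau>))"
      by (rule continuous_on_compose2[OF q_cont[of "2*m+1-2"]]) (use that in \<open>auto intro!: continuous_intros\<close>)
    then show ?thesis by (rule continuous_on_scaleR) (rule continuous_on_const)
  qed
  then have "continuous_on UNIV (\<lambda>t. \<Sum>m\<in>{1..<N}. q (2*m+1-2) (t - 2 * real m * \<tau>) *\<^sub>R Lpow W (2*m))"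
    by (rule continuous_on_sum)
  then show ?thesis unfolding ES_def[abs_def] .
qed



lemma ES_stable:
  assumes "N \<le> N'" "t \<le> 2 * real N * \<tau>" "\<tau> > 0"
  shows "ES \<tau> W i N' t = ES \<tau> W i N t"
  using assms(1)
proof (induction N' rule: dec_induct)
  case (step n)
  have "t - 2 * real n * \<tau> \<le> 0"
    using assms step(1) by (smt (verit, best) mult_right_mono of_nat_mono)
  then show ?case using step by (cases n) (simp_all add: ES_def)
qed simp

definition Ng :: "real \<Rightarrow> real \<Rightarrow> nat" where "Ng \<tau> t = nat \<lceil>t / \<tau>\<rceil> + 1"

lemma Ng_bound:
  assumes "\<tau> > 0" "t' < t + \<tau>"
  shows "t' \<le> 2 * real (Ng \<tau> t) * \<tau>"
proof -
  have "t / \<tau> \<le> real (nat \<lceil>t / \<tau>\<rceil>)" by linarith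
  then have a: "t \<le> real (nat \<lceil>t / \<tau>\<rceil>) * \<tau>" using assms(1) by (simp add: pos_divide_le_eq)
  have b: "0 \<le> real (nat \<lceil>t / \<tau>\<rceil>) * \<tau>" using assms(1) by simp
  have c: "2 * real (Ng \<tau> t) * \<tau> = 2 * (real (nat \<lceil>t / \<tau>\<rceil>) * \<tau>) + 2 * \<tau>"
    unfolding Ng_def by (simp add: algebra_simps)
  show ?thesis using a b c assms by linarith
qed

lemma ES_local:
  assumes "\<tau> > 0" "dist t' t < \<tau>"
  shows "ES \<tau> W i (Ng \<tau> t') t' = ES \<tau> W i (Ng \<tau> t) t'"
proof -
  let ?M = "max (Ng \<tau> t) (Ng \<tau> t')"
  have "t' < t + \<tau>" using assms(2) by (simp add: dist_real_def abs_less_iff)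
  then have "ES \<tau> W i ?M t' = ES \<tau> W i (Ng \<tau> t) t'"
    using assms by (intro ES_stable Ng_bound) auto
  moreover have "ES \<tau> W i ?M t' = ES \<tau> W i (Ng \<tau> t') t'"
    using assms by (intro ES_stable Ng_bound) auto
  ultimately show ?thesis by simp
qed

definition cst :: "nat \<Rightarrow> real \<Rightarrow> ('a::real_normed_vector \<Rightarrow>\<^sub>L 'a)" where
  "cst i t = (if i = 0 then t *\<^sub>R id_blinfun else if i = 1 then id_blinfun else 0)"

definition G :: "real \<Rightarrow> ('a::real_normed_vector \<Rightarrow>\<^sub>L 'a) \<Rightarrow> nat \<Rightarrow> real \<Rightarrow> ('a \<Rightarrow>\<^sub>L 'a)" where
  "G \<tau> W i t = cst i t + ES \<tau> W i (Ng \<tau> t) t"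

lemma cst_deriv: "i \<le> 1 \<Longrightarrow> (cst i has_vector_derivative cst (Suc i) t) (at t)"
  by (cases i) (auto simp: cst_def[abs_def] intro!: derivative_eq_intros)

lemma G_deriv:
  assumes "\<tau> > 0" "i \<le> 1"
  shows "(G \<tau> W i has_vector_derivative G \<tau> W (Suc i) t) (at t)"
proof -
  have "((\<lambda>t'. cst i t' + ES \<tau> W i (Ng \<tau> t) t') has_vector_derivative
       cst (Suc i) t + ES \<tau> W (Suc i) (Ng \<tau> t) t) (at t)"
    by (rule has_vector_derivative_add[OF cst_deriv[OF assms(2)] ES_deriv[OF assms(2)]])
  then have "((\<lambda>t'. cst i t' + ES \<tau> W i (Ng \<tau> t) t') has_vector_derivative G \<tau> W (Suc i) t) (at t)"
    by (simp add: G_def)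
  then show ?thesis
  proof (rule has_vector_derivative_transform_within_open[where S="ball t \<tau>"])
    fix y assume "y \<in> ball t \<tau>"
    then have "dist y t < \<tau>" by (simp add: dist_commute)
    then show "cst i y + ES \<tau> W i (Ng \<tau> t) y = G \<tau> W i y"
      using ES_local[OF assms(1) \<open>dist y t < \<tau>\<close>, of W i] by (simp add: G_def)
  qed (use assms in auto)
qed

lemma G2_cont:
  assumes "\<tau> > 0"
  shows "continuous_on UNIV (G \<tau> W 2)"
proof -
  have "continuous (at t) (G \<tau> W 2)" for t
  proof -
    have "continuous (at t) (ES \<tau> W 2 (Ng \<tau> t))"
      using ES_cont[of \<tau> W "Ng \<tau> t"] by (simp add: continuous_on_eq_continuous_at)
    then show ?thesis
    proof (rule continuous_transform_within[where s=UNIV, OF _ assms, simplified])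
      fix y assume "dist y t < \<tau>"
      then show "ES \<tau> W 2 (Ng \<tau> t) y = G \<tau> W 2 y"
        using ES_local[OF assms \<open>dist y t < \<tau>\<close>, of W 2] by (simp add: G_def cst_def)
    qed
  qed
  then show ?thesis by (simp add: continuous_on_eq_continuous_at)
qed



lemma KS_ES: "N \<ge> 1 \<Longrightarrow> KS \<tau> W N t = q 1 t *\<^sub>R id_blinfun + ES \<tau> W 0 N t"
proof (induction N rule: dec_induct)
  case base then show ?case by (simp add: KS_def ES_def)
next
  case (step n) then show ?case by (simp add: KS_def ES_def algebra_simps)
qed

lemma x2_G:
  assumes W: "L_iso W" and tau: "\<tau> > 0" and t: "t \<ge> 0"
  shows "x2 \<tau> t W = G \<tau> W 0 t"
proof -
  have "x2 \<tau> t W = KS \<tau> W (Ng \<tau> t) t"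
    by (rule x2_KS[OF W tau t Ng_bound[OF tau]]) (use tau in auto)
  also have "\<dots> = q 1 t *\<^sub>R id_blinfun + ES \<tau> W 0 (Ng \<tau> t) t"
    by (rule KS_ES) (simp add: Ng_def)
  also have "q 1 t = t" using t by (auto simp: q_def)
  finally show ?thesis by (simp add: G_def cst_def)
qed

lemma shift_sum: "(\<Sum>m\<in>{1..<Suc n}. h m) = (\<Sum>m<n. h (Suc m))"
  for h :: "nat \<Rightarrow> 'b::comm_monoid_add"
  by (induction n) (auto simp: add.commute)

lemma G2_x2:
  assumes W: "L_iso W" and tau: "\<tau> > 0"
  shows "G \<tau> W 2 t = Lpow W 2 o\<^sub>L x2 \<tau> (t - 2*\<tau>) W"
proof (cases "t - 2*\<tau> < 0")
  case True
  have "ES \<tau> W 2 N t = 0" for N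
  proof -
    have "q (2*m+1-2) (t - 2 * real m * \<tau>) = 0" if "m \<in> {1..<N}" for m
    proof -
      have "2 * \<tau> \<le> 2 * real m * \<tau>" using that tau by simp
      then show ?thesis using True by simp
    qed
    then show ?thesis by (simp add: ES_def)
  qed
  then show ?thesis using True by (simp add: G_def cst_def x2_neg)
next
  case False
  define N where "N = Ng \<tau> t"
  obtain n where n: "N = Suc n" by (simp add: N_def Ng_def)
  have tb: "t \<le> 2 * real N * \<tau>" unfolding N_def by (rule Ng_bound[OF tau]) (use tau in auto)
  have "x2 \<tau> (t - 2*\<tau>) W = KS \<tau> W n (t - 2*\<tau>)"
    by (rule x2_KS[OF W tau]) (use False tb n in \<open>auto simp: algebra_simps\<close>)
  then have "Lpow W 2 o\<^sub>L x2 \<tau> (t - 2*\<tau>) W =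
      (\<Sum>m<n. q (2*m+1) (t - 2*\<tau> - 2 * real m * \<tau>) *\<^sub>R (Lpow W 2 o\<^sub>L Lpow W (2*m)))"
    by (simp add: KS_def bounded_bilinear.sum_right[OF bounded_bilinear_blinfun_compose]
        bounded_bilinear.scaleR_right[OF bounded_bilinear_blinfun_compose])
  also have "\<dots> = (\<Sum>m<n. q (2*Suc m+1-2) (t - 2 * real (Suc m) * \<tau>) *\<^sub>R Lpow W (2*Suc m))"
  proof (rule sum.cong[OF refl])
    fix m
    have a: "Lpow W 2 o\<^sub>L Lpow W (2*m) = Lpow W (2*Suc m)"
      by (simp add: Lpow_add[symmetric])
    have b: "t - 2*\<tau> - 2 * real m * \<tau> = t - 2 * real (Suc m) * \<tau>"
      by (simp add: algebra_simps)
    have c: "2*Suc m+1-2 = 2*m+1" by simp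
    show "q (2*m+1) (t - 2*\<tau> - 2 * real m * \<tau>) *\<^sub>R (Lpow W 2 o\<^sub>L Lpow W (2*m)) =
        q (2*Suc m+1-2) (t - 2 * real (Suc m) * \<tau>) *\<^sub>R Lpow W (2*Suc m)"
      unfolding a b c ..
  qed
  also have "\<dots> = ES \<tau> W 2 N t"
    unfolding ES_def n shift_sum ..
  finally show ?thesis by (simp add: G_def cst_def N_def)
qed

lemma G_at0: "\<tau> > 0 \<Longrightarrow> G \<tau> W 0 0 = 0" "\<tau> > 0 \<Longrightarrow> G \<tau> W 1 0 = id_blinfun"
  by (auto simp: G_def cst_def ES_def)



lemma Lapply_deriv:
  fixes L L' :: "real \<Rightarrow> ('a::real_normed_vector \<Rightarrow>\<^sub>L 'a)"
  assumes "\<And>u. (L has_vector_derivative L' u) (at u)"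
  shows "((\<lambda>x. L (x - s) y) has_vector_derivative L' (x - s) y) (at x)"
proof -
  have "((\<lambda>x. x - s) has_vector_derivative 1) (at x)"
    by (auto intro!: derivative_eq_intros)
  from vector_diff_chain_at[OF this assms]
  have "((\<lambda>x. L (x - s)) has_vector_derivative L' (x - s)) (at x)" by (simp add: o_def)
  from bounded_linear.has_vector_derivative[OF blinfun.bounded_linear_left this]
  show ?thesis .
qed

lemma Lcont:
  fixes L :: "real \<Rightarrow> ('a::real_normed_vector \<Rightarrow>\<^sub>L 'a)"
  assumes "continuous_on UNIV L" "continuous_on S f"
  shows "continuous_on (UNIV \<times> S) (\<lambda>(x, s). L (x - s) (f s))"
proof -
  have "continuous_on (UNIV \<times> S) (\<lambda>p. L (fst p - snd p))"
    by (rule continuous_on_compose2[OF assms(1)]) (auto intro!: continuous_intros)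
  moreover have "continuous_on (UNIV \<times> S) (\<lambda>p. f (snd p))"
    by (rule continuous_on_compose2[OF assms(2)]) (auto intro!: continuous_intros)
  ultimately have "continuous_on (UNIV \<times> S) (\<lambda>p. L (fst p - snd p) (f (snd p)))"
    by (intro continuous_intros)
  then show ?thesis by (simp add: case_prod_beta)
qed

lemma Lcont1:
  fixes L :: "real \<Rightarrow> ('a::real_normed_vector \<Rightarrow>\<^sub>L 'a)"
  assumes "continuous_on UNIV L" "continuous_on S f"
  shows "continuous_on S (\<lambda>s. L (x - s) (f s))"
proof -
  have "continuous_on S (\<lambda>s. L (x - s))"
    by (rule continuous_on_compose2[OF assms(1)]) (auto intro!: continuous_intros)
  then show ?thesis using assms(2) by (intro continuous_intros)
qed

lemma conv_deriv:
  fixes L L' :: "real \<Rightarrow> ('a::banach \<Rightarrow>\<^sub>L 'a)" and f :: "real \<Rightarrow> 'a"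
  assumes Ld: "\<And>u. (L has_vector_derivative L' u) (at u)"
    and L'c: "continuous_on UNIV L'"
    and fc: "continuous_on {0..} f"
    and t: "t \<ge> 0"
  shows "((\<lambda>t. integral {0..t} (\<lambda>s. L (t - s) (f s))) has_vector_derivative
          (L 0 (f t) + integral {0..t} (\<lambda>s. L' (t - s) (f s)))) (at t within {0..})"
proof -
  define \<Phi> where "\<Phi> u v = integral {0..v} (\<lambda>s. L (u - s) (f s))" for u v
  have Lc: "continuous_on UNIV L"
    using Ld by (auto intro!: has_derivative_continuous_on simp: has_vector_derivative_def)
  have fcv: "continuous_on {0..v} f" if "v \<ge> 0" for v
    by (rule continuous_on_subset[OF fc]) auto
  define fxd where "fxd u v = integral {0..v} (\<lambda>s. L' (u - s) (f s))" for u v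
  have FX: "((\<lambda>u. \<Phi> u v) has_vector_derivative fxd u v) (at u)" if v: "v \<ge> 0" for u v
  proof -
    have "((\<lambda>x. integral (cbox 0 v) (\<lambda>s. L (x - s) (f s))) has_vector_derivative
        integral (cbox 0 v) (\<lambda>s. L' (u - s) (f s))) (at u within UNIV)"
    proof (rule leibniz_rule_vector_derivative)
      show "((\<lambda>x. L (x - s) (f s)) has_vector_derivative L' (x - s) (f s)) (at x within UNIV)" for x s
        using Lapply_deriv[OF Ld] by simp
      show "(\<lambda>s. L (x - s) (f s)) integrable_on cbox 0 v" for x
        unfolding cbox_interval by (rule integrable_continuous_real, rule Lcont1[OF Lc fcv[OF v]])
      show "continuous_on (UNIV \<times> cbox 0 v) (\<lambda>(x, s). L' (x - s) (f s))"
        unfolding cbox_interval by (rule Lcont[OF L'c fcv[OF v]])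
    qed auto
    then show ?thesis by (simp add: \<Phi>_def fxd_def cbox_interval)
  qed
  have FY: "((\<lambda>v. \<Phi> u v) has_vector_derivative L (u - v) (f v)) (at v within {0..})" if v: "v \<ge> 0" for u v
  proof -
    have "((\<lambda>v. \<Phi> u v) has_vector_derivative L (u - v) (f v)) (at v within {0..v+1})"
      unfolding \<Phi>_def
      by (rule integral_has_vector_derivative[OF Lcont1[OF Lc fcv]]) (use v in auto)
    moreover have "at v within {0..v+1} = at v within {0..}"
      by (rule at_within_nhd[where S="{..<v+1}"]) auto
    ultimately show ?thesis by simp
  qed
  have P: "((\<lambda>(x, y). \<Phi> x y) has_derivative
      (\<lambda>(tx, ty). tx *\<^sub>R fxd a b + ty *\<^sub>R L (a - b) (f b))) (at (a, b) within UNIV \<times> {0..})"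
    if ab: "(a, b) \<in> UNIV \<times> {0..}" for a b
  proof -
    have b: "b \<ge> 0" using ab by auto
    have "((\<lambda>(x, y). \<Phi> x y) has_derivative
      (\<lambda>(tx, ty). tx *\<^sub>R fxd a b + blinfun_scaleR_left (L (a - b) (f b)) ty)) (at (a, b) within UNIV \<times> {0..})"
    proof (rule has_derivative_partialsI)
      show "((\<lambda>x. \<Phi> x b) has_derivative (\<lambda>tx. tx *\<^sub>R fxd a b)) (at a within UNIV)"
        using FX[OF b, of a] by (simp add: has_vector_derivative_def)
      show "((\<lambda>y. \<Phi> x y) has_derivative blinfun_apply (blinfun_scaleR_left (L (x - y) (f y)))) (at y within {0..})"
        if "x \<in> UNIV" "y \<in> {0..}" for x y
        using FY[of y x] that by (simp add: has_vector_derivative_def)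
      have "continuous_on (UNIV \<times> {0..}) (\<lambda>(x, y). L (x - y) (f y))"
        by (rule Lcont[OF Lc fc])
      then have "continuous_on (UNIV \<times> {0..}) (\<lambda>(x, y). blinfun_scaleR_left (L (x - y) (f y)))"
        by (auto simp: split_beta intro!: continuous_intros)
      then show "continuous (at (a, b) within UNIV \<times> {0..}) (\<lambda>(x, y). blinfun_scaleR_left (L (x - y) (f y)))"
        using ab continuous_on_eq_continuous_within by blast
    qed (use b in auto)
    then show ?thesis by simp
  qed
  have D: "((\<lambda>s. (s, s)) has_derivative (\<lambda>h. (h, h))) (at t within {0..})"
    by (auto intro!: derivative_eq_intros)
  define g' where "g' p = (\<lambda>(tx, ty). tx *\<^sub>R fxd (fst p) (snd p) + ty *\<^sub>R L (fst p - snd p) (f (snd p)))" for p :: "real \<times> real"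
  have "((\<lambda>s. (\<lambda>(x, y). \<Phi> x y) (s, s)) has_derivative (\<lambda>h. g' (t, t) (h, h))) (at t within {0..})"
  proof (rule has_derivative_in_compose2[where t="UNIV \<times> {0..}", OF _ _ _ D])
    fix p :: "real \<times> real" assume "p \<in> UNIV \<times> {0..}"
    then obtain a b where "p = (a, b)" "(a, b) \<in> UNIV \<times> {0..}" by (cases p) auto
    then show "((\<lambda>(x, y). \<Phi> x y) has_derivative g' p) (at p within UNIV \<times> {0..})"
      using P[of a b] by (simp add: g'_def)
  qed (use t in auto)
  then show ?thesis
    by (simp add: has_vector_derivative_def \<Phi>_def fxd_def g'_def scaleR_add_right add.commute)
qed



lemma glue_deriv:
  fixes a :: real
  assumes a: "a < 0" and t: "t \<ge> a"
    and l: "t \<le> 0 \<Longrightarrow> (g has_vector_derivative D) (at t within {a..0})"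
    and r: "t \<ge> 0 \<Longrightarrow> (g has_vector_derivative D) (at t within {0..})"
  shows "(g has_vector_derivative D) (at t within {a..})"
proof -
  consider "t < 0" | "t > 0" | "t = 0" by linarith
  then show ?thesis
  proof cases
    case 1
    have "at t within {a..} = at t within {a..0}"
      by (rule at_within_nhd[where S="{..<0}"]) (use 1 t in auto)
    then show ?thesis using l 1 by simp
  next
    case 2
    have "at t within {a..} = at t within {0..}"
      by (rule at_within_nhd[where S="{0<..}"]) (use 2 t a in auto)
    then show ?thesis using r 2 by simp
  next
    case 3
    have "{a..0} \<union> {0..} = {a..}" using a by auto
    then show ?thesis using has_vector_derivative_Un[OF l r] 3 by simp
  qed
qed

lemma glue_cont:
  fixes a :: real
  assumes a: "a < 0" and t: "t \<ge> a"
    and l: "t \<le> 0 \<Longrightarrow> continuous (at t within {a..0}) g"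
    and r: "t \<ge> 0 \<Longrightarrow> continuous (at t within {0..}) g"
  shows "continuous (at t within {a..}) g"
proof -
  consider "t < 0" | "t > 0" | "t = 0" by linarith
  then show ?thesis
  proof cases
    case 1
    have "at t within {a..} = at t within {a..0}"
      by (rule at_within_nhd[where S="{..<0}"]) (use 1 t in auto)
    then show ?thesis using l 1 by simp
  next
    case 2
    have "at t within {a..} = at t within {0..}"
      by (rule at_within_nhd[where S="{0<..}"]) (use 2 t a in auto)
    then show ?thesis using r 2 by simp
  next
    case 3
    have "{a..0} \<union> {0..} = {a..}" using a by auto
    then show ?thesis using l r 3 unfolding continuous_within by (metis Lim_within_Un order_refl)
  qed
qed

lemma uniq:
  fixes \<Omega> :: "'a::banach \<Rightarrow>\<^sub>L 'a"
  assumes tau: "\<tau> > 0" and X: "classical_solution \<tau> \<Omega> f x" and Y: "classical_solution \<tau> \<Omega> f y"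
  shows "\<forall>t\<in>{-2*\<tau>..}. x t = y t"
proof -
  obtain x1 x2 x3 where X1: "\<forall>t\<in>{-2*\<tau>..}. (x has_vector_derivative x1 t) (at t within {-2*\<tau>..})"
    and X3: "\<forall>t\<in>{0..}. (x1 has_vector_derivative x3 t) (at t within {0..})"
    and XE: "\<forall>t\<in>{0..}. x3 t - Lpow \<Omega> 2 (x (t - 2*\<tau>)) = f t"
    and X0: "\<forall>t\<in>{-2*\<tau>..0}. x t = 0"
    using X unfolding classical_solution_def by blast
  obtain y1 y2 y3 where Y1: "\<forall>t\<in>{-2*\<tau>..}. (y has_vector_derivative y1 t) (at t within {-2*\<tau>..})"
    and Y3: "\<forall>t\<in>{0..}. (y1 has_vector_derivative y3 t) (at t within {0..})"
    and YE: "\<forall>t\<in>{0..}. y3 t - Lpow \<Omega> 2 (y (t - 2*\<tau>)) = f t"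
    and Y0: "\<forall>t\<in>{-2*\<tau>..0}. y t = 0"
    using Y unfolding classical_solution_def by blast
  define d where "d t = x t - y t" for t
  define d1 where "d1 t = x1 t - y1 t" for t
  define d3 where "d3 t = x3 t - y3 t" for t
  have D1: "(d has_vector_derivative d1 t) (at t within {-2*\<tau>..})" if "t \<ge> -2*\<tau>" for t
    unfolding d_def[abs_def] d1_def using X1 Y1 that by (auto intro!: has_vector_derivative_diff)
  have D3: "(d1 has_vector_derivative d3 t) (at t within {0..})" if "t \<ge> 0" for t
    unfolding d1_def[abs_def] d3_def using X3 Y3 that by (auto intro!: has_vector_derivative_diff)
  have DE: "d3 t = Lpow \<Omega> 2 (d (t - 2*\<tau>))" if "t \<ge> 0" for t
  proof -
    have "x3 t = f t + Lpow \<Omega> 2 (x (t - 2*\<tau>))" "y3 t = f t + Lpow \<Omega> 2 (y (t - 2*\<tau>))"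
      using XE YE that by (auto simp: algebra_simps)
    then show ?thesis by (simp add: d3_def d_def blinfun.diff_right)
  qed
  have D0: "d t = 0" if "t \<in> {-2*\<tau>..0}" for t using X0 Y0 that by (simp add: d_def)
  have d10: "d1 0 = 0"
  proof -
    have "(d has_vector_derivative d1 0) (at 0 within cbox (-2*\<tau>) 0)"
      using has_vector_derivative_within_subset[OF D1[of 0]] tau by auto
    moreover have "(d has_vector_derivative 0) (at 0 within cbox (-2*\<tau>) 0)"
      by (rule has_vector_derivative_transform[where f="\<lambda>_. 0"]) (use D0 tau in auto)
    ultimately show ?thesis
      by (rule vector_derivative_unique_within_closed_interval[rotated 2]) (use tau in auto)
  qed
  have step: "\<forall>t\<in>{-2*\<tau>..2 * real n * \<tau>}. d t = 0" for n
  proof (induction n)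
    case 0 then show ?case using D0 by auto
  next
    case (Suc n)
    define T where "T = 2 * real (Suc n) * \<tau>"
    have T0: "T \<ge> 0" using tau by (simp add: T_def)
    have "\<exists>c. \<forall>t\<in>{0..T}. d1 t = c"
    proof (rule has_derivative_zero_constant)
      fix t assume t: "t \<in> {0..T}"
      have "t - 2*\<tau> \<in> {-2*\<tau>..2 * real n * \<tau>}" using t by (auto simp: T_def algebra_simps)
      then have "d3 t = 0" using DE[of t] Suc t by simp
      then have "(d1 has_vector_derivative 0) (at t within {0..T})"
        using has_vector_derivative_within_subset[OF D3[of t]] t by auto
      then show "(d1 has_derivative (\<lambda>h. 0)) (at t within {0..T})"
        by (simp add: has_vector_derivative_def)
    qed simp
    then have d1z: "\<forall>t\<in>{0..T}. d1 t = 0" using d10 T0 by force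
    have "\<exists>c. \<forall>t\<in>{0..T}. d t = c"
    proof (rule has_derivative_zero_constant)
      fix t assume t: "t \<in> {0..T}"
      have "(d has_vector_derivative 0) (at t within {0..T})"
        using has_vector_derivative_within_subset[OF D1[of t]] t d1z tau by auto
      then show "(d has_derivative (\<lambda>h. 0)) (at t within {0..T})"
        by (simp add: has_vector_derivative_def)
    qed simp
    then have "\<forall>t\<in>{0..T}. d t = 0" using D0[of 0] T0 tau by force
    then show ?case using D0 by (auto simp: T_def)
  qed
  show ?thesis
  proof
    fix t assume t: "t \<in> {-2*\<tau>..}"
    obtain n where n: "t / (2*\<tau>) \<le> real n" using real_arch_simple by blast
    have "t \<le> 2 * real n * \<tau>" using n tau by (simp add: divide_le_eq algebra_simps)
    then have "d t = 0" using step[of n] t by auto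
    then show "x t = y t" by (simp add: d_def)
  qed
qed



theorem mainTheorem6:
  fixes \<Omega> :: "'a::banach \<Rightarrow>\<^sub>L 'a" and \<tau> :: real and f :: "real \<Rightarrow> 'a"
  assumes "L_iso \<Omega>" and "\<tau> > 0" and "continuous_on {0..} f"
  defines "xs \<equiv> (\<lambda>t. if t < 0 then 0 else integral {0..t} (\<lambda>s. x2 \<tau> (t - s) \<Omega> (f s)))"
  shows "classical_solution \<tau> \<Omega> f xs \<and>
         (\<forall>x. classical_solution \<tau> \<Omega> f x \<longrightarrow> (\<forall>t\<in>{-2*\<tau>..}. x t = xs t))"
proof -
  note W = assms(1) and tau = assms(2) and fc = assms(3)
  define C where "C L t = integral {0..t} (\<lambda>s. blinfun_apply (L (t - s)) (f s))" for L :: "real \<Rightarrow> ('a \<Rightarrow>\<^sub>L 'a)" and t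
  let ?G = "G \<tau> \<Omega>"
  have xsC: "xs t = C (?G 0) t" if "t \<ge> 0" for t
  proof -
    have "xs t = integral {0..t} (\<lambda>s. x2 \<tau> (t - s) \<Omega> (f s))" using that by (simp add: xs_def)
    also have "\<dots> = C (?G 0) t" unfolding C_def
      by (rule integral_cong) (simp add: x2_G[OF W tau])
    finally show ?thesis .
  qed
  have xs_neg: "xs t = 0" if "t < 0" for t using that by (simp add: xs_def)
  have xs0: "xs t = 0" if "t \<in> {-2*\<tau>..0}" for t
    using that by (cases "t < 0") (auto simp: xs_def)
  have G0d: "(?G 0 has_vector_derivative ?G 1 u) (at u)" for u
    using G_deriv[OF tau, of 0] by simp
  have G1d: "(?G 1 has_vector_derivative ?G 2 u) (at u)" for u
    using G_deriv[OF tau, of 1] by (simp add: numeral_2_eq_2)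
  have G1c: "continuous_on UNIV (?G 1)"
    using G1d by (auto intro!: has_derivative_continuous_on simp: has_vector_derivative_def)
  have dC0: "(C (?G 0) has_vector_derivative C (?G 1) t) (at t within {0..})" if "t \<ge> 0" for t
    using conv_deriv[OF G0d G1c fc that] by (simp add: C_def[abs_def] G_at0[OF tau] G_at0(2)[OF tau, unfolded One_nat_def])
  have dC1: "(C (?G 1) has_vector_derivative f t + C (?G 2) t) (at t within {0..})" if "t \<ge> 0" for t
    using conv_deriv[OF G1d G2_cont[OF tau] fc that] by (simp add: C_def[abs_def] G_at0[OF tau] G_at0(2)[OF tau, unfolded One_nat_def])
  have G0c: "continuous_on UNIV (?G 0)"
    using G0d by (auto intro!: has_derivative_continuous_on simp: has_vector_derivative_def)
  have fcv: "continuous_on {0..v} f" if "v \<ge> 0" for v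
    by (rule continuous_on_subset[OF fc]) auto
  have hx: "?G 2 (t - s) (f s) = Lpow \<Omega> 2 (x2 \<tau> (t - 2*\<tau> - s) \<Omega> (f s))" for t s
  proof -
    have e: "t - s - 2*\<tau> = t - 2*\<tau> - s" by simp
    show ?thesis using G2_x2[OF W tau, of "t - s"] unfolding e by simp
  qed
  have x2_0: "x2 \<tau> 0 \<Omega> = 0" using x2_G[OF W tau, of 0] G_at0[OF tau] by simp
  have C2: "C (?G 2) t = Lpow \<Omega> 2 (xs (t - 2*\<tau>))" if t: "t \<ge> 0" for t
  proof (cases "t - 2*\<tau> < 0")
    case True
    have "C (?G 2) t = integral {0..t} (\<lambda>s. 0)"
      unfolding C_def by (rule integral_cong) (use True in \<open>auto simp: hx x2_neg\<close>)
    then show ?thesis using True by (simp add: xs_neg)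
  next
    case False
    define r where "r = t - 2*\<tau>"
    have r0: "r \<ge> 0" "r \<le> t" using False tau by (auto simp: r_def)
    define h where "h s = ?G 2 (t - s) (f s)" for s
    have hi: "h integrable_on {0..t}"
      unfolding h_def by (rule integrable_continuous_real, rule Lcont1[OF G2_cont[OF tau] fcv[OF t]])
    have "C (?G 2) t = integral {0..r} h + integral {r..t} h"
      unfolding C_def h_def[symmetric] using Henstock_Kurzweil_Integration.integral_combine[OF r0 hi] by simp
    moreover have "integral {r..t} h = 0"
    proof -
      have "integral {r..t} h = integral {r..t} (\<lambda>s. 0)"
      proof (rule integral_cong)
        fix s assume s: "s \<in> {r..t}"
        show "h s = 0"
        proof (cases "s = r")
          case True then show ?thesis by (simp add: h_def hx r_def[symmetric] x2_0)
        next
          case False then show ?thesis using s by (simp add: h_def hx r_def[symmetric] x2_neg)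
        qed
      qed
      then show ?thesis by simp
    qed
    moreover have "integral {0..r} h = Lpow \<Omega> 2 (xs r)"
    proof -
      have ki: "(\<lambda>s. x2 \<tau> (r - s) \<Omega> (f s)) integrable_on {0..r}"
      proof (rule integrable_eq)
        show "(\<lambda>s. ?G 0 (r - s) (f s)) integrable_on {0..r}"
          by (rule integrable_continuous_real, rule Lcont1[OF G0c fcv[OF r0(1)]])
        show "?G 0 (r - s) (f s) = x2 \<tau> (r - s) \<Omega> (f s)" if "s \<in> {0..r}" for s
          using that x2_G[OF W tau, of "r - s"] by simp
      qed
      have "integral {0..r} h = integral {0..r} (\<lambda>s. Lpow \<Omega> 2 (x2 \<tau> (r - s) \<Omega> (f s)))"
        by (rule integral_cong) (simp add: h_def hx r_def)
      also have "\<dots> = Lpow \<Omega> 2 (integral {0..r} (\<lambda>s. x2 \<tau> (r - s) \<Omega> (f s)))"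
        by (rule integral_blinfun_apply[OF ki])
      also have "\<dots> = Lpow \<Omega> 2 (xs r)" using r0 by (simp add: xs_def)
      finally show ?thesis .
    qed
    ultimately show ?thesis by (simp add: r_def)
  qed
  define x' where "x' t = (if t < 0 then 0 else C (?G 1) t)" for t
  define z'' where "z'' t = f t + Lpow \<Omega> 2 (xs (t - 2*\<tau>))" for t
  have x'0: "x' t = 0" if "t \<le> 0" for t using that by (cases "t < 0") (auto simp: x'_def C_def)
  have Dxs: "(xs has_vector_derivative x' t) (at t within {-2*\<tau>..})" if "t \<ge> -2*\<tau>" for t
  proof (rule glue_deriv[OF _ that])
    show "-2*\<tau> < 0" using tau by simp
    assume t0: "t \<le> 0"
    then have "x' t = 0" by (rule x'0)
    moreover have "(xs has_vector_derivative 0) (at t within {-2*\<tau>..0})"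
      by (rule has_vector_derivative_transform[where f="\<lambda>_. 0"]) (use xs0 t0 that in auto)
    ultimately show "(xs has_vector_derivative x' t) (at t within {-2*\<tau>..0})" by simp
  next
    assume t: "t \<ge> 0"
    have c0: "(C (?G 0) has_vector_derivative x' t) (at t within {0..})"
      using dC0[OF t] t by (cases "t = 0") (auto simp: x'_def)
    show "(xs has_vector_derivative x' t) (at t within {0..})"
      by (rule has_vector_derivative_transform[where f="C (?G 0)", OF _ _ c0]) (use xsC t in auto)
  qed
  have Dx'r: "(x' has_vector_derivative z'' t) (at t within {0..})" if t: "t \<ge> 0" for t
  proof -
    have c1: "(C (?G 1) has_vector_derivative z'' t) (at t within {0..})"
      using dC1[OF t] C2[OF t] by (simp add: z''_def)
    have e: "x' s = C (?G 1) s" if "s \<in> {0..}" for s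
      using that by (cases "s = 0") (auto simp: x'_def C_def)
    show ?thesis
      by (rule has_vector_derivative_transform[where f="C (?G 1)", OF _ _ c1]) (use t e in auto)
  qed
  have Dx'l: "(x' has_vector_derivative 0) (at t within {-2*\<tau>..0})" if "t \<in> {-2*\<tau>..0}" for t
    by (rule has_vector_derivative_transform[where f="\<lambda>_. 0", OF that]) (use x'0 that in auto)
  have x'c: "continuous_on {-2*\<tau>..} x'"
  proof -
    have "continuous (at t within {-2*\<tau>..}) x'" if "t \<in> {-2*\<tau>..}" for t
    proof (rule glue_cont)
      show "-2*\<tau> < 0" using tau by simp
      show "-2*\<tau> \<le> t" using that by simp
      show "continuous (at t within {-2*\<tau>..0}) x'" if "t \<le> 0"
        using Dx'l[of t] \<open>t \<in> {-2*\<tau>..}\<close> that has_vector_derivative_continuous by auto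
      show "continuous (at t within {0..}) x'" if "t \<ge> 0"
        using Dx'r[OF that] has_vector_derivative_continuous by auto
    qed
    then show ?thesis by (simp add: continuous_on_eq_continuous_within)
  qed
  have xsc: "continuous_on {-2*\<tau>..} xs"
    using Dxs has_vector_derivative_continuous continuous_on_eq_continuous_within by fastforce
  have z''c: "continuous_on {0..} z''"
  proof -
    have "continuous_on {0..} (\<lambda>t. xs (t - 2*\<tau>))"
      by (rule continuous_on_compose2[OF xsc]) (auto intro!: continuous_intros)
    then show ?thesis unfolding z''_def[abs_def] using fc by (intro continuous_intros)
  qed
  have sol: "classical_solution \<tau> \<Omega> f xs"
    unfolding classical_solution_def
    by (intro exI[of _ x'] exI[of _ "\<lambda>_::real. 0::'a"] exI[of _ z''] conjI ballI)
      (use Dxs x'c Dx'l Dx'r z''c xs0 in \<open>auto simp: z''_def\<close>)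
  show ?thesis using sol uniq[OF tau _ sol] by blast
qed


end
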